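(* Let $H$ be a clutter, $T$ a minimal transversal of $H$, $S\subseteq V(H)$ and $x\in V(H)$. Then either (i) there exists a minimal transversal $T'\subseteq T\setminus\{x\}$ of $H\backslash x$ such that $T'\cap S=(T\setminus\{x\})\cap S$; or (ii) there exist a vertex $z\in S\setminus\{x\}$ and an edge $h\in E(H)$ such that $x\in h$, $h\cap T=\{z\}$, and $T\setminus\{z\}\in b(H\circ(h,x,z))$.
   Context: A hypergraph has a finite vertex set and a set of subsets (edges). A clutter is a hypergraph in which no edge is a proper subset of another; $cl(\cdot)$ keeps only the inclusion-wise minimal edges. A transversal of $H$ is a vertex set meeting every edge; $b(H)$ is the clutter of inclusion-wise minimal transversals. For $v\in V(H)$: $H\backslash v=(V(H)\setminus\{v\},\{h\in E(H):v\notin h\})$ and $H/v=cl(V(H)\setminus\{v\},\{h\setminus\{v\}:h\in E(H)\})$. For disjoint $D,C\subseteq V(H)$, $H[D;C]$ is the clutter obtained by deleting all vertices of $D$ and contracting all vertices of $C$ (the order does not matter). The join of clutters is $H\vee F=cl(V(H)\cup V(F),E(H)\cup E(F))$. For an edge $h\in E(H)$ and distinct $u,v\in h$, $H\circ(h,u,v)=H[\{u\};h\setminus\{u\}]\vee H[\{v\};h\setminus\{v\}]$. *)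

theory Defs
  imports Main
begin

type_synonym 'a hypergraph = "'a set \<times> 'a set set"

definition verts :: "'a hypergraph \<Rightarrow> 'a set" where
  "verts H = fst H"

definition edges :: "'a hypergraph \<Rightarrow> 'a set set" where
  "edges H = snd H"

definition hypergraph :: "'a hypergraph \<Rightarrow> bool" where
  "hypergraph H \<longleftrightarrow> finite (verts H) \<and> (\<forall>h\<in>edges H. h \<subseteq> verts H)"

definition clutter :: "'a hypergraph \<Rightarrow> bool" where
  "clutter H \<longleftrightarrow> hypergraph H \<and> (\<forall>g\<in>edges H. \<forall>h\<in>edges H. \<not> g \<subset> h)"

definition cl :: "'a hypergraph \<Rightarrow> 'a hypergraph" where
  "cl H = (verts H, {h\<in>edges H. \<forall>g\<in>edges H. \<not> g \<subset> h})"

definition transversal :: "'a hypergraph \<Rightarrow> 'a set \<Rightarrow> bool" where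
  "transversal H T \<longleftrightarrow> T \<subseteq> verts H \<and> (\<forall>h\<in>edges H. T \<inter> h \<noteq> {})"

definition blocker :: "'a hypergraph \<Rightarrow> 'a hypergraph" where
  "blocker H = (verts H, {T. transversal H T \<and> (\<forall>T'. T' \<subset> T \<longrightarrow> \<not> transversal H T')})"

definition del :: "'a hypergraph \<Rightarrow> 'a \<Rightarrow> 'a hypergraph" where
  "del H v = (verts H - {v}, {h\<in>edges H. v \<notin> h})"

definition contr :: "'a hypergraph \<Rightarrow> 'a \<Rightarrow> 'a hypergraph" where
  "contr H v = cl (verts H - {v}, (\<lambda>h. h - {v}) ` edges H)"

text \<open>H[D;C]: delete all vertices of D and contract all vertices of C (D, C disjoint).\<close>
definition minor :: "'a hypergraph \<Rightarrow> 'a set \<Rightarrow> 'a set \<Rightarrow> 'a hypergraph" where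
  "minor H D C = cl (verts H - (D \<union> C), (\<lambda>h. h - C) ` {h\<in>edges H. h \<inter> D = {}})"

definition join :: "'a hypergraph \<Rightarrow> 'a hypergraph \<Rightarrow> 'a hypergraph" where
  "join H F = cl (verts H \<union> verts F, edges H \<union> edges F)"

definition circ :: "'a hypergraph \<Rightarrow> 'a set \<Rightarrow> 'a \<Rightarrow> 'a \<Rightarrow> 'a hypergraph" where
  "circ H h u v = join (minor H {u} (h - {u})) (minor H {v} (h - {v}))"

end

theory Submission
  imports Defs
begin

lemma cl_sub:
  assumes "\<forall>e\<in>E. finite e" "e \<in> E"
  shows "\<exists>f\<in>edges (cl (V,E)). f \<subseteq> e"
proof -
  obtain f where f: "f \<in> E \<and> f \<subseteq> e" and m: "\<forall>g. g \<in> E \<and> g \<subseteq> e \<longrightarrow> card f \<le> card g"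
    using ex_has_least_nat[of "\<lambda>f. f \<in> E \<and> f \<subseteq> e" e card] assms by blast
  have "\<forall>g\<in>E. \<not> g \<subset> f"
  proof (intro ballI notI)
    fix g assume "g \<in> E" "g \<subset> f"
    then have "card g < card f" using f assms by (meson psubset_card_mono)
    with m \<open>g \<in> E\<close> \<open>g \<subset> f\<close> f show False by fastforce
  qed
  with f show ?thesis by (auto simp: cl_def edges_def)
qed

lemma meets_cl:
  assumes "\<forall>e\<in>E. finite e"
  shows "(\<forall>f\<in>edges (cl (V,E)). A \<inter> f \<noteq> {}) \<longleftrightarrow> (\<forall>f\<in>E. A \<inter> f \<noteq> {})"
proof
  assume a: "\<forall>f\<in>edges (cl (V,E)). A \<inter> f \<noteq> {}"
  show "\<forall>f\<in>E. A \<inter> f \<noteq> {}"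
  proof
    fix f assume "f \<in> E"
    then obtain g where "g \<in> edges (cl (V,E))" "g \<subseteq> f" using cl_sub assms by blast
    with a show "A \<inter> f \<noteq> {}" by blast
  qed
next
  assume "\<forall>f\<in>E. A \<inter> f \<noteq> {}"
  then show "\<forall>f\<in>edges (cl (V,E)). A \<inter> f \<noteq> {}" by (auto simp: cl_def edges_def)
qed

lemma trans_circ:
  assumes hg: "hypergraph H" and "x \<in> h" "z \<in> h"
  shows "transversal (circ H h x z) A \<longleftrightarrow> A \<subseteq> verts H - h \<and>
     (\<forall>e\<in>edges H. (x \<notin> e \<or> z \<notin> e) \<longrightarrow> A \<inter> (e - h) \<noteq> {})"
proof -
  have fin: "\<forall>e\<in>edges H. finite e" using hg unfolding hypergraph_def by (meson finite_subset)
  define E1 where "E1 = (\<lambda>e. e - (h - {x})) ` {e\<in>edges H. e \<inter> {x} = {}}"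
  define E2 where "E2 = (\<lambda>e. e - (h - {z})) ` {e\<in>edges H. e \<inter> {z} = {}}"
  define V1 where "V1 = verts H - ({x} \<union> (h - {x}))"
  define V2 where "V2 = verts H - ({z} \<union> (h - {z}))"
  have f1: "\<forall>e\<in>E1. finite e" using fin unfolding E1_def by auto
  have f2: "\<forall>e\<in>E2. finite e" using fin unfolding E2_def by auto
  have m1: "minor H {x} (h - {x}) = cl (V1, E1)" unfolding minor_def V1_def E1_def by simp
  have m2: "minor H {z} (h - {z}) = cl (V2, E2)" unfolding minor_def V2_def E2_def by simp
  define F where "F = edges (cl (V1,E1)) \<union> edges (cl (V2,E2))"
  have vc: "verts (cl (V1,E1)) = V1" "verts (cl (V2,E2)) = V2" by (auto simp: cl_def verts_def)
  have fF: "\<forall>e\<in>F. finite e" using f1 f2 unfolding F_def by (auto simp: cl_def edges_def)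
  have circ: "circ H h x z = cl (V1 \<union> V2, F)"
    unfolding circ_def join_def m1 m2 F_def vc by simp
  have vv: "V1 \<union> V2 = verts H - h" using assms unfolding V1_def V2_def by auto
  have "transversal (circ H h x z) A \<longleftrightarrow> A \<subseteq> verts H - h \<and> (\<forall>f\<in>F. A \<inter> f \<noteq> {})"
    unfolding circ transversal_def using meets_cl[OF fF, of "V1 \<union> V2" A] vv
    by (simp add: cl_def verts_def)
  also have "(\<forall>f\<in>F. A \<inter> f \<noteq> {}) \<longleftrightarrow> (\<forall>f\<in>E1. A \<inter> f \<noteq> {}) \<and> (\<forall>f\<in>E2. A \<inter> f \<noteq> {})"
  proof -
    have "(\<forall>f\<in>F. A \<inter> f \<noteq> {}) \<longleftrightarrow> (\<forall>f\<in>edges (cl (V1,E1)). A \<inter> f \<noteq> {}) \<and> (\<forall>f\<in>edges (cl (V2,E2)). A \<inter> f \<noteq> {})"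
      unfolding F_def by (rule ball_Un)
    then show ?thesis using meets_cl[OF f1, of V1 A] meets_cl[OF f2, of V2 A] by simp
  qed
  also have "(\<forall>f\<in>E1. A \<inter> f \<noteq> {}) \<longleftrightarrow> (\<forall>e\<in>edges H. x \<notin> e \<longrightarrow> A \<inter> (e - h) \<noteq> {})"
  proof -
    have "\<And>e. x \<notin> e \<Longrightarrow> e - (h - {x}) = e - h" by auto
    then show ?thesis unfolding E1_def by auto
  qed
  also have "(\<forall>f\<in>E2. A \<inter> f \<noteq> {}) \<longleftrightarrow> (\<forall>e\<in>edges H. z \<notin> e \<longrightarrow> A \<inter> (e - h) \<noteq> {})"
  proof -
    have "\<And>e. z \<notin> e \<Longrightarrow> e - (h - {z}) = e - h" by auto
    then show ?thesis unfolding E2_def by auto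
  qed
  finally show ?thesis by blast
qed

lemma min_edge:
  assumes "T \<in> edges (blocker H)" "t \<in> T"
  shows "\<exists>e\<in>edges H. e \<inter> T = {t}"
proof -
  have tr: "transversal H T" and mn: "\<forall>T'. T' \<subset> T \<longrightarrow> \<not> transversal H T'"
    using assms(1) by (auto simp: blocker_def edges_def)
  have "\<not> transversal H (T - {t})" using mn assms(2) by blast
  moreover have "T - {t} \<subseteq> verts H" using tr by (auto simp: transversal_def)
  ultimately obtain e where e: "e \<in> edges H" "(T - {t}) \<inter> e = {}" by (auto simp: transversal_def)
  with tr have "T \<inter> e \<noteq> {}" by (auto simp: transversal_def)
  with e show ?thesis by blast
qed

theorem mainTheorem14:
  fixes H :: "'a hypergraph" and T S :: "'a set" and x :: 'a
  assumes "clutter H"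
    and "T \<in> edges (blocker H)"
    and "S \<subseteq> verts H"
    and "x \<in> verts H"
  shows "(\<exists>T'. T' \<subseteq> T - {x} \<and> T' \<in> edges (blocker (del H x)) \<and> T' \<inter> S = (T - {x}) \<inter> S)
       \<or> (\<exists>z \<in> S - {x}. \<exists>h \<in> edges H. x \<in> h \<and> h \<inter> T = {z}
             \<and> T - {z} \<in> edges (blocker (circ H h x z)))"
proof -
  have hg: "hypergraph H" using assms(1) by (simp add: clutter_def)
  have trT: "transversal H T" and mnT: "\<forall>T'. T' \<subset> T \<longrightarrow> \<not> transversal H T'"
    using assms(2) by (auto simp: blocker_def edges_def)
  have TV: "T \<subseteq> verts H" using trT by (simp add: transversal_def)
  have vdel: "verts (del H x) = verts H - {x}" and edel: "edges (del H x) = {h\<in>edges H. x \<notin> h}"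
    by (simp_all add: del_def verts_def edges_def)
  define R where "R = (T - {x}) \<inter> S"
  define P where "P = (\<lambda>B. R \<subseteq> B \<and> B \<subseteq> T - {x} \<and> transversal (del H x) B)"
  have "P (T - {x})" unfolding P_def R_def transversal_def vdel edel using TV trT
    by (auto simp: transversal_def)
  then obtain B where PB: "P B" and mB: "\<forall>C. P C \<longrightarrow> card B \<le> card C"
    using ex_has_least_nat[of P "T - {x}" card] by blast
  have finT: "finite T" using TV hg by (meson finite_subset hypergraph_def)
  have BT: "B \<subseteq> T - {x}" and RB: "R \<subseteq> B" and trB: "transversal (del H x) B"
    using PB by (auto simp: P_def)
  have finB: "finite B" using BT finT by (meson finite_Diff finite_subset)
  show ?thesis
  proof (cases "B \<in> edges (blocker (del H x))")
    case True
    have "B \<inter> S = (T - {x}) \<inter> S" using BT RB unfolding R_def by blast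
    with True BT show ?thesis by blast
  next
    case False
    then obtain B' where B': "B' \<subset> B" "transversal (del H x) B'"
      using trB by (auto simp: blocker_def edges_def)
    then obtain z where z: "z \<in> B" "z \<notin> B'" by blast
    have trBz: "transversal (del H x) (B - {z})"
      using B' z trB unfolding transversal_def by blast
    have zR: "z \<in> R"
    proof (rule ccontr)
      assume "z \<notin> R"
      then have "P (B - {z})" using RB BT trBz unfolding P_def by blast
      with mB have "card B \<le> card (B - {z})" by blast
      moreover have "card (B - {z}) < card B" using finB z(1) by (meson card_Diff1_less)
      ultimately show False by simp
    qed
    then have zS: "z \<in> S - {x}" and zT: "z \<in> T" unfolding R_def by auto
    obtain h where h: "h \<in> edges H" "h \<inter> T = {z}" using min_edge[OF assms(2) zT] by blast
    have xh: "x \<in> h"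
    proof (rule ccontr)
      assume "x \<notin> h"
      then have "h \<in> edges (del H x)" using h edel by simp
      with trBz have "(B - {z}) \<inter> h \<noteq> {}" by (simp add: transversal_def)
      with BT h(2) show False by auto
    qed
    have zh: "z \<in> h" using h by blast
    have tr: "transversal (circ H h x z) (T - {z})"
      unfolding trans_circ[OF hg xh zh]
    proof (intro conjI ballI impI)
      show "T - {z} \<subseteq> verts H - h" using TV h(2) by auto
    next
      fix e assume e: "e \<in> edges H" "x \<notin> e \<or> z \<notin> e"
      show "(T - {z}) \<inter> (e - h) \<noteq> {}"
      proof (cases "x \<notin> e")
        case True
        then have "e \<in> edges (del H x)" using e edel by simp
        with trBz obtain w where "w \<in> B - {z}" "w \<in> e" by (auto simp: transversal_def)
        then show ?thesis using BT h(2) by auto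
      next
        case False
        then have "z \<notin> e" using e by blast
        from trT e(1) obtain w where "w \<in> T" "w \<in> e" by (auto simp: transversal_def)
        then show ?thesis using \<open>z \<notin> e\<close> h(2) by auto
      qed
    qed
    have mn: "\<forall>A. A \<subset> T - {z} \<longrightarrow> \<not> transversal (circ H h x z) A"
    proof (intro allI impI notI)
      fix A assume A: "A \<subset> T - {z}" "transversal (circ H h x z) A"
      then obtain t where t: "t \<in> T" "t \<noteq> z" "t \<notin> A" by blast
      obtain e where e: "e \<in> edges H" "e \<inter> T = {t}" using min_edge[OF assms(2) t(1)] by blast
      have "z \<notin> e" using e(2) zT t(2) by auto
      with A(2) e(1) have "A \<inter> (e - h) \<noteq> {}" unfolding trans_circ[OF hg xh zh] by blast
      with A(1) e(2) t(3) show False by auto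
    qed
    have "T - {z} \<in> edges (blocker (circ H h x z))"
      using tr mn by (simp add: blocker_def edges_def)
    with zS h xh show ?thesis by blast
  qed
qed

end
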